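(* For every term variable $x$ and every $\delta\in\mathcal{T}_D$: $x\in[\![\delta]\!]$.
   Context: $\lambda\mu$-calculus (Parigot). Terms $M,N ::= x \mid \lambda x.M \mid MN \mid \mu\alpha.[\beta]M$ over disjoint denumerable sets of term variables and names. Structural substitution $T[\alpha\Leftarrow L]$ replaces every subterm $[\alpha]N$ of $T$ by $[\alpha]N'L$ where $N'=N[\alpha\Leftarrow L]$ (recursively). Reduction is the compatible closure of $(\lambda x.M)N\to M[N/x]$ (capture-avoiding) and $(\mu\beta.[\gamma]M)N\to\mu\beta.(([\gamma]M)[\beta\Leftarrow N])$. $\mathcal{SN}$ is the set of terms with no infinite reduction sequence. A stack is a finite (possibly empty) sequence $\vec L=L_1:\cdots:L_k$ of terms, and $M\vec L$ denotes $ML_1\cdots L_k$; $\mathcal{SN}^*$ is the set of stacks of terms in $\mathcal{SN}$. Types: with constant $\nu$ and symbol $\omega$ (not itself a type), $\mathcal{T}_D:\ \delta ::= \nu \mid \omega\to\nu \mid \kappa\to\nu \mid \delta\wedge\delta$; $\mathcal{T}_C:\ \kappa ::= \delta\times\omega \mid \delta\times\kappa \mid \kappa\wedge\kappa$. Interpretation: $[\![\nu]\!]=[\![\omega\to\nu]\!]=\mathcal{SN}$; $[\![\kappa\to\nu]\!]=\{M\mid \forall\vec L\in[\![\kappa]\!].\ M\vec L\in\mathcal{SN}\}$; $[\![\delta\times\omega]\!]=\{N:\vec L\mid N\in[\![\delta]\!],\vec L\in\mathcal{SN}^*\}$; $[\![\delta\times\kappa]\!]=\{N:\vec L\mid N\in[\![\delta]\!],\vec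 L\in[\![\kappa]\!]\}$; $[\![\sigma\wedge\tau]\!]=[\![\sigma]\!]\cap[\![\tau]\!]$. *)

theory Defs
  imports Main
begin

text \<open>Term variables and names are two disjoint sorts of de Bruijn indices.
  Var i is the term variable i; Lam M binds a term variable;
  Mu b M stands for mu alpha.[beta]M where the mu binds a name (index 0 inside M)
  and b is the de Bruijn index of the name beta, counted inside the binder.\<close>

datatype trm = Var nat | Lam trm | App trm trm | Mu nat trm

primrec liftT :: "nat \<Rightarrow> trm \<Rightarrow> trm" where
  "liftT k (Var i) = (if i < k then Var i else Var (Suc i))"
| "liftT k (Lam M) = Lam (liftT (Suc k) M)"
| "liftT k (App M N) = App (liftT k M) (liftT k N)"
| "liftT k (Mu b M) = Mu b (liftT k M)"

primrec liftN :: "nat \<Rightarrow> trm \<Rightarrow> trm" where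
  "liftN k (Var i) = Var i"
| "liftN k (Lam M) = Lam (liftN k M)"
| "liftN k (App M N) = App (liftN k M) (liftN k N)"
| "liftN k (Mu b M) = Mu (if b < Suc k then b else Suc b) (liftN (Suc k) M)"

primrec subst :: "trm \<Rightarrow> nat \<Rightarrow> trm \<Rightarrow> trm" where
  "subst (Var i) k s = (if i < k then Var i else if i = k then s else Var (i - 1))"
| "subst (Lam M) k s = Lam (subst M (Suc k) (liftT 0 s))"
| "subst (App M N) k s = App (subst M k s) (subst N k s)"
| "subst (Mu b M) k s = Mu b (subst M k (liftN 0 s))"

text \<open>Structural substitution T[k <= L]: every subterm [k]N becomes [k](N' L)
  where N' = N[k <= L].\<close>
primrec structsubst :: "trm \<Rightarrow> nat \<Rightarrow> trm \<Rightarrow> trm" where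
  "structsubst (Var i) k L = Var i"
| "structsubst (Lam M) k L = Lam (structsubst M k (liftT 0 L))"
| "structsubst (App M N) k L = App (structsubst M k L) (structsubst N k L)"
| "structsubst (Mu b M) k L =
     (let L' = liftN 0 L; M' = structsubst M (Suc k) L'
      in Mu b (if b = Suc k then App M' L' else M'))"

text \<open>Structural substitution applied to a command [b]M (b the name index).\<close>
definition structcmd :: "nat \<Rightarrow> trm \<Rightarrow> nat \<Rightarrow> trm \<Rightarrow> trm" where
  "structcmd b M k L = (let M' = structsubst M k L in if b = k then App M' L else M')"

text \<open>One-step reduction: compatible closure of beta and structural (mu) reduction.
  (mu beta.[gamma]M) N  \<rightarrow>  mu beta.(([gamma]M)[beta <= N]); inside the binder beta is
  index 0 and N has to be shifted over the name binder.\<close>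
inductive red :: "trm \<Rightarrow> trm \<Rightarrow> bool" where
  beta: "red (App (Lam M) N) (subst M 0 N)"
| mu: "red (App (Mu g M) N) (Mu g (structcmd g M 0 (liftN 0 N)))"
| lam: "red M M' \<Longrightarrow> red (Lam M) (Lam M')"
| appL: "red M M' \<Longrightarrow> red (App M N) (App M' N)"
| appR: "red N N' \<Longrightarrow> red (App M N) (App M N')"
| muC: "red M M' \<Longrightarrow> red (Mu b M) (Mu b M')"

definition SN :: "trm set" where
  "SN = {M. \<not> (\<exists>f. f 0 = M \<and> (\<forall>i. red (f i) (f (Suc i))))}"

definition appstack :: "trm \<Rightarrow> trm list \<Rightarrow> trm" where
  "appstack M Ls = foldl App M Ls"

datatype dty = Nu | OmegaArr | KArr cty | DAnd dty dty
     and cty = DTimesOmega dty | DTimesK dty cty | KAnd cty cty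

primrec interpD :: "dty \<Rightarrow> trm set" and interpC :: "cty \<Rightarrow> trm list set" where
  "interpD Nu = SN"
| "interpD OmegaArr = SN"
| "interpD (KArr k) = {M. \<forall>Ls \<in> interpC k. appstack M Ls \<in> SN}"
| "interpD (DAnd d1 d2) = interpD d1 \<inter> interpD d2"
| "interpC (DTimesOmega d) = {N # Ls | N Ls. N \<in> interpD d \<and> set Ls \<subseteq> SN}"
| "interpC (DTimesK d k) = {N # Ls | N Ls. N \<in> interpD d \<and> Ls \<in> interpC k}"
| "interpC (KAnd k1 k2) = interpC k1 \<inter> interpC k2"

end

theory Submission
  imports Defs
begin

abbreviation "RR \<equiv> {(y,x). red x y}"

lemma acc_noinf: "M \<in> Wellfounded.acc RR \<Longrightarrow> \<not> (\<exists>f. f 0 = M \<and> (\<forall>i. red (f i) (f (Suc i))))"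
proof (induction rule: Wellfounded.acc.induct)
  case (accI x)
  show ?case
  proof
    assume "\<exists>f. f 0 = x \<and> (\<forall>i. red (f i) (f (Suc i)))"
    then obtain f where f: "f 0 = x" "\<forall>i. red (f i) (f (Suc i))" by blast
    have "red x (f (Suc 0))" using f by metis
    then have r: "(f (Suc 0), x) \<in> RR" by simp
    have "\<exists>g. g 0 = f (Suc 0) \<and> (\<forall>i. red (g i) (g (Suc i)))"
      using f by (intro exI[of _ "\<lambda>i. f (Suc i)"]) simp
    with accI.IH[OF r] show False by (rule notE)
  qed
qed

lemma step_nacc: "y \<notin> Wellfounded.acc RR \<Longrightarrow> \<exists>z. red y z \<and> z \<notin> Wellfounded.acc RR"
proof (rule ccontr)
  assume a: "y \<notin> Wellfounded.acc RR" "\<not> (\<exists>z. red y z \<and> z \<notin> Wellfounded.acc RR)"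
  have "y \<in> Wellfounded.acc RR"
  proof (rule Wellfounded.accI)
    fix z assume "(z, y) \<in> RR"
    then have "red y z" by simp
    then show "z \<in> Wellfounded.acc RR" using a(2) by blast
  qed
  with a(1) show False by (rule notE)
qed

lemma noinf_acc:
  assumes "\<not> (\<exists>f. f 0 = M \<and> (\<forall>i. red (f i) (f (Suc i))))"
  shows "M \<in> Wellfounded.acc RR"
proof (rule ccontr)
  assume n: "M \<notin> Wellfounded.acc RR"
  define f where "f = rec_nat M (\<lambda>_ y. SOME z. red y z \<and> z \<notin> Wellfounded.acc RR)"
  have f0: "f 0 = M" by (simp add: f_def)
  have fS: "\<And>i. f (Suc i) = (SOME z. red (f i) z \<and> z \<notin> Wellfounded.acc RR)" by (simp add: f_def)
  have *: "\<And>i. f i \<notin> Wellfounded.acc RR \<and> red (f i) (f (Suc i))"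
  proof -
    fix i
    have na: "f i \<notin> Wellfounded.acc RR"
    proof (induction i)
      case 0 then show ?case using n f0 by simp
    next
      case (Suc i)
      show ?case unfolding fS using someI_ex[OF step_nacc[OF Suc]] by blast
    qed
    then show "f i \<notin> Wellfounded.acc RR \<and> red (f i) (f (Suc i))"
      unfolding fS using someI_ex[OF step_nacc[OF na]] by blast
  qed
  have "\<exists>f. f 0 = M \<and> (\<forall>i. red (f i) (f (Suc i)))" using f0 * by blast
  with assms show False by (rule notE)
qed

lemma SN_acc: "SN = Wellfounded.acc RR"
  unfolding SN_def using acc_noinf noinf_acc by blast

fun hv :: "trm \<Rightarrow> bool" where
  "hv (Var _) = True" | "hv (App M N) = hv M" | "hv _ = False"

lemma red_hv: "red M M' \<Longrightarrow> hv M \<Longrightarrow> hv M'"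
  by (induction rule: red.induct) auto

lemma red_app_hv: "red (App M N) R \<Longrightarrow> hv M \<Longrightarrow> (\<exists>M'. R = App M' N \<and> red M M') \<or> (\<exists>N'. R = App M N' \<and> red N N')"
  by (erule red.cases) auto

lemma app_acc:
  assumes "M \<in> Wellfounded.acc RR" "hv M" "N \<in> Wellfounded.acc RR"
  shows "App M N \<in> Wellfounded.acc RR"
  using assms
proof (induction M arbitrary: N rule: Wellfounded.acc.induct)
  case (accI M)
  note IHM = accI.IH
  from accI.prems(2) accI.prems(1) show ?case
  proof (induction N rule: Wellfounded.acc.induct)
    case (accI N)
    show ?case
    proof (rule Wellfounded.accI)
      fix R assume "(R, App M N) \<in> RR"
      then have "red (App M N) R" by simp
      from red_app_hv[OF this accI.prems] show "R \<in> Wellfounded.acc RR"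
      proof
        assume "\<exists>M'. R = App M' N \<and> red M M'"
        then obtain M' where "R = App M' N" "red M M'" by blast
        have "(M', M) \<in> RR" using \<open>red M M'\<close> by simp
        moreover have "N \<in> Wellfounded.acc RR" using accI.hyps by (rule Wellfounded.accI)
        ultimately show ?thesis using IHM[of M' N] red_hv \<open>red M M'\<close> accI.prems \<open>R = App M' N\<close> by blast
      next
        assume "\<exists>N'. R = App M N' \<and> red N N'"
        then obtain N' where "R = App M N'" "red N N'" by blast
        then show ?thesis using accI.IH accI.prems by blast
      qed
    qed
  qed
qed

lemma var_acc: "Var x \<in> Wellfounded.acc RR"
  by (rule Wellfounded.accI) (auto elim: red.cases)

lemma foldl_acc: "hv M \<Longrightarrow> M \<in> Wellfounded.acc RR \<Longrightarrow> set Ls \<subseteq> Wellfounded.acc RR \<Longrightarrow> foldl App M Ls \<in> Wellfounded.acc RR"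
  by (induction Ls arbitrary: M) (simp_all add: app_acc)

lemma acc_appL: "T \<in> Wellfounded.acc RR \<Longrightarrow> \<forall>M N. T = App M N \<longrightarrow> M \<in> Wellfounded.acc RR"
proof (induction rule: Wellfounded.acc.induct)
  case (accI T)
  show ?case
  proof (intro allI impI)
    fix M N assume T: "T = App M N"
    show "M \<in> Wellfounded.acc RR"
    proof (rule Wellfounded.accI)
      fix M' assume "(M', M) \<in> RR"
      then have "(App M' N, T) \<in> RR" using T red.appL by auto
      then show "M' \<in> Wellfounded.acc RR" using accI.IH by blast
    qed
  qed
qed

lemma foldl_accD: "foldl App M Ls \<in> Wellfounded.acc RR \<Longrightarrow> M \<in> Wellfounded.acc RR"
  by (induction Ls arbitrary: M) (auto dest: acc_appL)

lemma main:
  "(\<forall>x. Var x \<in> interpD d) \<and> interpD d \<subseteq> SN"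
  "(\<forall>Ls\<in>interpC k. set Ls \<subseteq> SN) \<and> (\<exists>n. \<forall>Ls. n \<le> length Ls \<longrightarrow> set Ls \<subseteq> range Var \<longrightarrow> Ls \<in> interpC k)"
proof (induction d and k)
  case Nu
  then show ?case using var_acc SN_acc by auto
next
  case OmegaArr
  then show ?case using var_acc SN_acc by auto
next
  case (KArr k)
  then obtain n where n: "\<forall>Ls. n \<le> length Ls \<longrightarrow> set Ls \<subseteq> range Var \<longrightarrow> Ls \<in> interpC k" by blast
  have r: "replicate n (Var 0) \<in> interpC k" using n[rule_format, of "replicate n (Var 0)"] by (simp add: set_replicate_conv_if)
  have 1: "\<forall>x. Var x \<in> interpD (KArr k)"
    using KArr foldl_acc var_acc SN_acc by (auto simp: appstack_def)
  have 2: "interpD (KArr k) \<subseteq> SN"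
    using r foldl_accD SN_acc by (auto simp: appstack_def)
  show ?case using 1 2 by blast
next
  case (DAnd d1 d2)
  then show ?case by auto
next
  case (DTimesOmega d)
  have "\<forall>Ls. 1 \<le> length Ls \<longrightarrow> set Ls \<subseteq> range Var \<longrightarrow> Ls \<in> interpC (DTimesOmega d)"
  proof (intro allI impI)
    fix Ls :: "trm list" assume a: "1 \<le> length Ls" "set Ls \<subseteq> range Var"
    then obtain N T where "Ls = N # T" by (cases Ls) auto
    then show "Ls \<in> interpC (DTimesOmega d)" using a DTimesOmega var_acc SN_acc by auto
  qed
  then show ?case using DTimesOmega by auto
next
  case (DTimesK d k)
  then obtain n where n: "\<forall>Ls. n \<le> length Ls \<longrightarrow> set Ls \<subseteq> range Var \<longrightarrow> Ls \<in> interpC k" by blast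
  have "\<forall>Ls. Suc n \<le> length Ls \<longrightarrow> set Ls \<subseteq> range Var \<longrightarrow> Ls \<in> interpC (DTimesK d k)"
  proof (intro allI impI)
    fix Ls :: "trm list" assume a: "Suc n \<le> length Ls" "set Ls \<subseteq> range Var"
    then obtain N T where "Ls = N # T" by (cases Ls) auto
    then show "Ls \<in> interpC (DTimesK d k)" using a DTimesK n by auto
  qed
  moreover have "\<forall>Ls\<in>interpC (DTimesK d k). set Ls \<subseteq> SN"
  proof
    fix Ls assume "Ls \<in> interpC (DTimesK d k)"
    then obtain N T where "Ls = N # T" "N \<in> interpD d" "T \<in> interpC k" by auto
    then show "set Ls \<subseteq> SN" using DTimesK.IH by auto
  qed
  ultimately show ?case by blast
next
  case (KAnd k1 k2)
  then obtain n1 n2 where n1: "\<forall>Ls. n1 \<le> length Ls \<longrightarrow> set Ls \<subseteq> range Var \<longrightarrow> Ls \<in> interpC k1"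
    and n2: "\<forall>Ls. n2 \<le> length Ls \<longrightarrow> set Ls \<subseteq> range Var \<longrightarrow> Ls \<in> interpC k2" by blast
  have "\<forall>Ls. max n1 n2 \<le> length Ls \<longrightarrow> set Ls \<subseteq> range Var \<longrightarrow> Ls \<in> interpC (KAnd k1 k2)"
    using n1 n2 by auto
  then have "\<exists>n. \<forall>Ls. n \<le> length Ls \<longrightarrow> set Ls \<subseteq> range Var \<longrightarrow> Ls \<in> interpC (KAnd k1 k2)" by blast
  moreover have "\<forall>Ls\<in>interpC (KAnd k1 k2). set Ls \<subseteq> SN" using KAnd.IH by auto
  ultimately show ?case by blast
qed

theorem mainTheorem9:
  fixes x :: nat and \<delta> :: dty
  shows "Var x \<in> interpD \<delta>"
  using main(1) by blast

end
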